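(* Let $f:\mathbb{R}^{d\times r}\to\mathbb{R}$ be a $\rho$-weakly convex function ($\rho\ge 0$), and suppose that $f$ is $L$-Lipschitz continuous on some bounded open convex set $\mathcal U\subseteq\mathbb{R}^{d\times r}$ containing $\mathcal M=\mathrm{St}(d,r)$. Then for every $\lambda\in\big(0,(\rho+3L)^{-1}\big)$, the proximal mapping $P_{\lambda f}$ is single-valued on $\mathcal M$, and for all $x,y\in\mathcal M$, $$\|P_{\lambda f}(x)-P_{\lambda f}(y)\|_F\le \frac{1}{1-\lambda(\rho+3L)}\,\|x-y\|_F .$$
   Context: $\mathcal M=\mathrm{St}(d,r)=\{x\in\mathbb{R}^{d\times r}: x^\top x=I_r\}$ with $d\ge r$, equipped with the Frobenius norm $\|\cdot\|_F$. A function $f$ is $\rho$-weakly convex if $f+\frac{\rho}{2}\|\cdot\|_F^2$ is convex. For $\lambda>0$ and $x\in\mathcal M$, the manifold Moreau envelope and proximal mapping are $f_\lambda(x)=\min_{y\in\mathcal M}\{f(y)+\frac{1}{2\lambda}\|y-x\|_F^2\}$ and $P_{\lambda f}(x)\in\arg\min_{y\in\mathcal M}\{f(y)+\frac{1}{2\lambda}\|y-x\|_F^2\}$ (a priori a set-valued mapping). *)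

theory Defs
  imports "HOL-Analysis.Analysis"
begin

text \<open>Matrices in R^(d x r) are modelled as real^'r^'d (rows indexed by 'd, columns by 'r).
  The library norm on this type is exactly the Frobenius norm.\<close>

definition frob :: "real^'r^'d \<Rightarrow> real" where
  "frob x = norm x"

definition stiefel :: "(real^'r^'d) set" where
  "stiefel = {x. transpose x ** x = mat 1}"

definition weakly_convex :: "real \<Rightarrow> (real^'r^'d \<Rightarrow> real) \<Rightarrow> bool" where
  "weakly_convex \<rho> f \<longleftrightarrow> convex_on UNIV (\<lambda>x. f x + \<rho> / 2 * (frob x)\<^sup>2)"

definition prox_set :: "real \<Rightarrow> (real^'r^'d \<Rightarrow> real) \<Rightarrow> real^'r^'d \<Rightarrow> (real^'r^'d) set" where
  "prox_set lam f x = {y \<in> stiefel. \<forall>z \<in> stiefel.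
      f y + 1 / (2 * lam) * (frob (y - x))\<^sup>2 \<le> f z + 1 / (2 * lam) * (frob (z - x))\<^sup>2}"

end

theory Submission
  imports Defs
begin


lemma inner_mat_adj:
  fixes A :: "real^'n^'m" and X :: "real^'k^'n" and Y :: "real^'k^'m"
  shows "inner (A ** X) Y = inner X (transpose A ** Y)"
proof -
  have "inner (A ** X) Y = (\<Sum>i\<in>UNIV. \<Sum>j\<in>UNIV. \<Sum>k\<in>UNIV. A$i$k * X$k$j * Y$i$j)"
    by (simp add: inner_vec_def matrix_matrix_mult_def sum_distrib_right)
  also have "\<dots> = (\<Sum>i\<in>UNIV. \<Sum>k\<in>UNIV. \<Sum>j\<in>UNIV. A$i$k * X$k$j * Y$i$j)"
    by (rule sum.cong[OF refl], rule sum.swap)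
  also have "\<dots> = (\<Sum>k\<in>UNIV. \<Sum>i\<in>UNIV. \<Sum>j\<in>UNIV. A$i$k * X$k$j * Y$i$j)"
    by (rule sum.swap)
  also have "\<dots> = (\<Sum>k\<in>UNIV. \<Sum>j\<in>UNIV. \<Sum>i\<in>UNIV. A$i$k * X$k$j * Y$i$j)"
    by (rule sum.cong[OF refl], rule sum.swap)
  also have "\<dots> = inner X (transpose A ** Y)"
    by (simp add: inner_vec_def matrix_matrix_mult_def transpose_def sum_distrib_left mult_ac)
  finally show ?thesis .
qed

lemma matrix_mul_uminus_left: "(- A) ** (X::real^'k^'n) = - (A ** X)"
  by (simp add: matrix_matrix_mult_def vec_eq_iff sum_negf)

lemma matrix_mul_diff_left: "(A - B) ** (X::real^'k^'n) = A ** X - B ** X"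
  by (simp add: matrix_matrix_mult_def vec_eq_iff sum_subtractf left_diff_distrib)

lemma matrix_mul_diff_right: "(A::real^'n^'m) ** (X - Y) = A ** X - A ** Y"
  by (simp add: matrix_matrix_mult_def vec_eq_iff sum_subtractf right_diff_distrib)

lemma matrix_mul_add_left: "(A + B) ** (X::real^'k^'n) = A ** X + B ** X"
  by (simp add: matrix_matrix_mult_def vec_eq_iff sum.distrib distrib_right)

lemma transpose_add: "transpose ((A::real^'n^'m) + B) = transpose A + transpose B"
  by (simp add: transpose_def vec_eq_iff)

lemma transpose_diff: "transpose ((A::real^'n^'m) - B) = transpose A - transpose B"
  by (simp add: transpose_def vec_eq_iff)

lemma transpose_uminus: "transpose (- (A::real^'n^'m)) = - transpose A"
  by (simp add: transpose_def vec_eq_iff)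

lemma skew_inner_zero:
  fixes A :: "real^'n^'n" and X :: "real^'k^'n"
  assumes "transpose A = - A"
  shows "inner X (A ** X) = 0"
proof -
  have "inner (A ** X) X = inner X (transpose A ** X)" by (rule inner_mat_adj)
  also have "\<dots> = - inner X (A ** X)" using assms by (simp add: matrix_mul_uminus_left)
  finally show ?thesis by (simp add: inner_commute)
qed

lemma norm_sq_mat: "(norm (X::real^'k^'n))^2 = (\<Sum>i\<in>UNIV. \<Sum>j\<in>UNIV. (X$i$j)^2)"
  unfolding power2_norm_eq_inner inner_vec_def by (simp add: power2_eq_square)

lemma norm_transpose: "norm (transpose (X::real^'k^'n)) = norm X"
proof -
  have "(norm (transpose X))^2 = (norm X)^2"
    unfolding norm_sq_mat by (simp add: transpose_def, rule sum.swap)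
  then show ?thesis by (simp add: power2_eq_iff_nonneg)
qed

lemma norm_orth_mul:
  fixes p :: "real^'r^'d" and S :: "real^'k^'r"
  assumes "transpose p ** p = mat 1"
  shows "norm (p ** S) = norm S"
proof -
  have "inner (p ** S) (p ** S) = inner S (transpose p ** (p ** S))" by (rule inner_mat_adj)
  also have "\<dots> = inner S S" by (simp add: matrix_mul_assoc assms)
  finally show ?thesis by (simp add: norm_eq_sqrt_inner)
qed

lemma norm_mat_mul_le:
  fixes A :: "real^'n^'m" and B :: "real^'k^'n"
  shows "norm (A ** B) \<le> norm A * norm B"
proof -
  have cs: "(\<Sum>k\<in>UNIV. A$i$k * B$k$j)^2 \<le> (\<Sum>k\<in>UNIV. (A$i$k)^2) * (\<Sum>k\<in>UNIV. (B$k$j)^2)" for i j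
  proof -
    have "(inner (A$i) (column j B))^2 \<le> (norm (A$i))^2 * (norm (column j B))^2"
      by (metis Cauchy_Schwarz_ineq power2_norm_eq_inner)
    then show ?thesis
      unfolding power2_norm_eq_inner by (simp add: inner_vec_def column_def power2_eq_square)
  qed
  have "(norm (A ** B))^2 = (\<Sum>i\<in>UNIV. \<Sum>j\<in>UNIV. (\<Sum>k\<in>UNIV. A$i$k * B$k$j)^2)"
    by (simp add: norm_sq_mat matrix_matrix_mult_def)
  also have "\<dots> \<le> (\<Sum>i\<in>UNIV. \<Sum>j\<in>UNIV. (\<Sum>k\<in>UNIV. (A$i$k)^2) * (\<Sum>k\<in>UNIV. (B$k$j)^2))"
    by (intro sum_mono cs)
  also have "\<dots> = (\<Sum>i\<in>UNIV. \<Sum>k\<in>UNIV. (A$i$k)^2) * (\<Sum>j\<in>UNIV. \<Sum>k\<in>UNIV. (B$k$j)^2)"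
    by (rule sum_product[symmetric])
  also have "\<dots> = (norm A * norm B)^2"
  proof -
    have "(norm B)^2 = (\<Sum>j\<in>UNIV. \<Sum>k\<in>UNIV. (B$k$j)^2)"
      unfolding norm_sq_mat by (rule sum.swap)
    then show ?thesis by (simp add: norm_sq_mat power_mult_distrib)
  qed
  finally show ?thesis
    using power2_le_imp_le by (metis mult_nonneg_nonneg norm_ge_zero)
qed




lemma skew_inner_zero_vec:
  fixes A :: "real^'n^'n"
  assumes "transpose A = - A"
  shows "inner y (A *v y) = 0"
proof -
  have "inner (A *v y) y = inner (y v* A) y"
    by (metis dot_lmul_matrix inner_commute)
  also have "y v* A = transpose A *v y" by simp
  also have "\<dots> = - (A *v y)" using assms
    by (simp add: matrix_vector_mult_def vec_eq_iff sum_negf)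
  finally show ?thesis by (simp add: inner_commute)
qed

lemma mat_scaleR_right: "(B::real^'n^'m) ** (c *\<^sub>R Y) = c *\<^sub>R (B ** Y)"
  by (simp add: matrix_matrix_mult_def vec_eq_iff sum_distrib_left mult_ac)

lemma mat_scaleR_left: "(c *\<^sub>R (B::real^'n^'m)) ** Y = c *\<^sub>R (B ** Y)"
  by (simp add: matrix_matrix_mult_def vec_eq_iff sum_distrib_left mult_ac)

lemma aux_e1:
  fixes p u w :: "'a::real_vector"
  shows "(p + u) - (p - u) - 2 *\<^sub>R (u - w) = 2 *\<^sub>R w"
  by (simp add: scaleR_2 algebra_simps)

lemma cayley_curve:
  fixes W :: "real^'d^'d" and p :: "real^'r^'d" and t :: real
  assumes skew: "transpose W = - W" and orth: "transpose p ** p = mat 1"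
  shows "\<exists>z. transpose z ** z = mat 1 \<and>
     norm (z - (p + t *\<^sub>R (W ** p))) \<le> t^2 / 2 * norm (W ** (W ** p))"
proof -
  define A where "A = (t/2) *\<^sub>R W"
  have skA: "transpose A = - A" using skew by (simp add: A_def transpose_scalar)
  define M :: "real^'d^'d" where "M = mat 1 - A"
  define N :: "real^'d^'d" where "N = mat 1 + A"
  have tM: "transpose M = N" using skA by (simp add: M_def N_def transpose_diff)
  have tN: "transpose N = M" using tM by (metis transpose_transpose)
  have MN: "M ** N = N ** M"
    by (simp add: M_def N_def matrix_mul_diff_left matrix_mul_add_left matrix_add_ldistrib
        matrix_mul_diff_right algebra_simps)
  have ker: "\<forall>y. M *v y = 0 \<longrightarrow> y = 0"
  proof (intro allI impI)
    fix y assume "M *v y = 0"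
    then have "y = A *v y" by (simp add: M_def algebra_simps)
    then have "inner y y = inner y (A *v y)" by simp
    also have "\<dots> = 0" using skA by (rule skew_inner_zero_vec)
    finally show "y = 0" by simp
  qed
  obtain B where BM: "B ** M = mat 1" using ker matrix_left_invertible_ker by blast
  have MB: "M ** B = mat 1" using BM matrix_left_right_inverse by blast
  have tBN: "transpose B ** N = mat 1"
  proof -
    have "transpose (B ** M) = mat 1" using BM by simp
    then have "N ** transpose B = mat 1" by (simp add: matrix_transpose_mul tM)
    then show ?thesis using matrix_left_right_inverse by blast
  qed
  have BN: "B ** N = N ** B"
  proof -
    have "B ** N = B ** N ** (M ** B)" by (simp add: MB flip: matrix_mul_assoc)
    also have "\<dots> = B ** (N ** M) ** B" by (simp add: matrix_mul_assoc)
    also have "\<dots> = B ** (M ** N) ** B" by (simp add: MN)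
    also have "\<dots> = (B ** M) ** N ** B" by (simp add: matrix_mul_assoc)
    finally show ?thesis by (simp add: BM)
  qed
  define Q where "Q = B ** N"
  have QQ: "transpose Q ** Q = mat 1"
  proof -
    have "transpose Q ** Q = transpose (N ** B) ** (N ** B)" by (simp add: Q_def BN)
    also have "\<dots> = transpose B ** (M ** N) ** B"
      by (simp add: matrix_transpose_mul tN matrix_mul_assoc)
    also have "\<dots> = (transpose B ** N) ** (M ** B)"
      by (simp add: MN matrix_mul_assoc)
    finally show ?thesis by (simp add: tBN MB)
  qed
  have Bcontr: "norm (B ** Y) \<le> norm Y" for Y :: "real^'r^'d"
  proof -
    have "M ** (B ** Y) = Y" by (simp add: matrix_mul_assoc MB)
    moreover have "norm X \<le> norm (M ** X)" for X :: "real^'r^'d"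
    proof -
      have "M ** X = X - A ** X" by (simp add: M_def matrix_mul_diff_left)
      then have "(norm (M ** X))^2 = (norm X)^2 - 2 * inner X (A ** X) + (norm (A ** X))^2"
        by (simp add: power2_norm_eq_inner inner_diff_left inner_diff_right inner_commute)
      also have "\<dots> \<ge> (norm X)^2" using skew_inner_zero[OF skA, of X] by simp
      finally show ?thesis using power2_le_imp_le by (metis norm_ge_zero)
    qed
    ultimately show ?thesis by metis
  qed
  define z where "z = Q ** p"
  have zz: "transpose z ** z = mat 1"
  proof -
    have "transpose z ** z = transpose p ** ((transpose Q ** Q) ** p)"
      by (simp add: z_def matrix_transpose_mul matrix_mul_assoc)
    then show ?thesis by (simp add: QQ orth)
  qed
  have e1: "N ** p - M ** p - 2 *\<^sub>R (M ** (A ** p)) = 2 *\<^sub>R (A ** (A ** p))"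
  proof -
    have "N ** p = p + A ** p" by (simp add: N_def matrix_mul_add_left)
    moreover have "M ** p = p - A ** p" by (simp add: M_def matrix_mul_diff_left)
    moreover have "M ** (A ** p) = A ** p - A ** (A ** p)" by (simp add: M_def matrix_mul_diff_left)
    ultimately show ?thesis by (simp only: aux_e1)
  qed
  have pB: "p = B ** (M ** p)" by (simp add: matrix_mul_assoc BM)
  have ApB: "A ** p = B ** (M ** (A ** p))" by (simp add: matrix_mul_assoc BM)
  have tW: "t *\<^sub>R (W ** p) = 2 *\<^sub>R (A ** p)"
  proof -
    have "t *\<^sub>R (W ** p) = (t *\<^sub>R W) ** p" by (rule scalar_matrix_assoc)
    also have "t *\<^sub>R W = 2 *\<^sub>R A" by (simp add: A_def)
    also have "(2 *\<^sub>R A) ** p = 2 *\<^sub>R (A ** p)" by (rule scalar_matrix_assoc[symmetric])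
    finally show ?thesis .
  qed
  have "z - (p + t *\<^sub>R (W ** p)) = B ** (N ** p) - p - 2 *\<^sub>R (A ** p)"
    by (simp add: z_def Q_def tW matrix_mul_assoc)
  also have "\<dots> = B ** (N ** p) - B ** (M ** p) - 2 *\<^sub>R (B ** (M ** (A ** p)))"
    using pB ApB by metis
  also have "\<dots> = B ** (N ** p - M ** p - 2 *\<^sub>R (M ** (A ** p)))"
    by (simp only: matrix_mul_diff_right mat_scaleR_right)
  also have "\<dots> = B ** (2 *\<^sub>R (A ** (A ** p)))" by (simp add: e1)
  finally have "norm (z - (p + t *\<^sub>R (W ** p))) \<le> norm (2 *\<^sub>R (A ** (A ** p)))"
    using Bcontr by metis
  also have "2 *\<^sub>R (A ** (A ** p)) = (t^2/2) *\<^sub>R (W ** (W ** p))"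
    by (simp add: A_def matrix_scalar_ac scalar_matrix_assoc[symmetric] power2_eq_square)
  finally show ?thesis using zz by auto
qed




lemma half_sub: fixes y :: "'a::real_vector" shows "y - (1/2) *\<^sub>R y = (1/2) *\<^sub>R y"
proof -
  have "y = (1/2) *\<^sub>R y + (1/2) *\<^sub>R y" by (simp flip: scaleR_add_left)
  then show ?thesis by (metis add_diff_cancel_right')
qed
lemma aux_half:
  fixes P T I :: "'a::real_vector"
  shows "P - I + (1/2) *\<^sub>R (2 *\<^sub>R I - T - P) = (1/2) *\<^sub>R (P - T)"
  using half_sub[of P] by (simp add: algebra_simps)
lemma aux_half3:
  fixes y :: "'a::real_vector"
  shows "- y + (1/2) *\<^sub>R y = - ((1/2) *\<^sub>R y)"
  using half_sub[of y] by (metis minus_diff_eq uminus_add_conv_diff)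

lemma tangent_decomp:
  fixes p q :: "real^'r^'d"
  assumes op: "transpose p ** p = mat 1" and oq: "transpose q ** q = mat 1"
  shows "\<exists>(W::real^'d^'d) n. transpose W = - W \<and> W ** p = (q - p) + n \<and> norm n \<le> (norm (q - p))^2 / 2"
proof -
  define P where "P = transpose p ** q"
  define D where "D = transpose (q - p) ** (q - p)"
  have D_eq: "D = 2 *\<^sub>R mat 1 - transpose P - P"
  proof -
    have "D = transpose q ** q - transpose p ** q - (transpose q ** p - transpose p ** p)"
      by (simp add: D_def transpose_diff matrix_mul_diff_left matrix_mul_diff_right)
    also have "transpose q ** p = transpose P" by (simp add: P_def matrix_transpose_mul)
    finally show ?thesis by (simp add: op oq P_def scaleR_2 algebra_simps)
  qed
  define n where "n = (1/2) *\<^sub>R (p ** D)"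
  define v where "v = (q - p) + n"
  have ptv: "transpose p ** v = (1/2) *\<^sub>R (P - transpose P)"
  proof -
    have "transpose p ** v = P - mat 1 + (1/2) *\<^sub>R D"
      by (simp add: v_def n_def P_def matrix_add_ldistrib matrix_mul_diff_right
           mat_scaleR_right matrix_mul_assoc op)
    also have "\<dots> = (1/2) *\<^sub>R (P - transpose P)"
      unfolding D_eq by (rule aux_half)
    finally show ?thesis .
  qed
  have vtp: "transpose v ** p = - (transpose p ** v)"
  proof -
    have "transpose v ** p = transpose (transpose p ** v)" by (simp add: matrix_transpose_mul)
    also have "\<dots> = (1/2) *\<^sub>R (transpose P - P)"
      by (simp add: ptv transpose_scalar transpose_diff)
    finally show ?thesis by (simp add: ptv algebra_simps)
  qed
  define K where "K = (1/2) *\<^sub>R (transpose v ** p)"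
  define a where "a = v + p ** K"
  define W where "W = a ** transpose p - p ** transpose a"
  have skew: "transpose W = - W"
    by (simp add: W_def transpose_diff matrix_transpose_mul)
  have atp: "transpose a ** p = - ((1/2) *\<^sub>R (transpose p ** v))"
  proof -
    have "transpose a ** p = transpose v ** p + transpose K ** (transpose p ** p)"
      by (simp add: a_def transpose_add matrix_transpose_mul matrix_mul_add_left matrix_mul_assoc)
    also have "transpose K = (1/2) *\<^sub>R (transpose p ** v)"
      by (simp add: K_def transpose_scalar matrix_transpose_mul)
    finally show ?thesis using op vtp aux_half3 by simp
  qed
  have Wp: "W ** p = v"
  proof -
    have "W ** p = a ** (transpose p ** p) - p ** (transpose a ** p)"
      by (simp add: W_def matrix_mul_diff_left matrix_mul_assoc)
    also have "\<dots> = a - p ** (- ((1/2) *\<^sub>R (transpose p ** v)))"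
      by (simp only: op matrix_mul_rid atp)
    also have "K = - ((1/2) *\<^sub>R (transpose p ** v))" by (simp add: K_def vtp)
    then have "a - p ** (- ((1/2) *\<^sub>R (transpose p ** v))) = v" by (simp add: a_def)
    finally show ?thesis .
  qed
  have "norm n = (1/2) * norm D"
    by (simp add: n_def norm_orth_mul[OF op])
  also have "norm D \<le> norm (transpose (q - p)) * norm (q - p)"
    unfolding D_def by (rule norm_mat_mul_le)
  finally have "norm n \<le> (norm (q - p))^2 / 2"
    by (simp add: norm_transpose power2_eq_square)
  then show ?thesis using skew Wp v_def by blast
qed




lemma lin_B:
  fixes P Z zx2 Fw LZ G H wx2 I J Q R T :: real
  assumes "P \<le> Z + zx2" "Z \<le> Fw + LZ" "Fw \<le> G" "LZ \<le> H" "zx2 = wx2 + 2*I + Q" "I \<le> J" "Q \<le> R" "wx2 = T"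
  shows "P \<le> G + H + T + 2*J + R"
  using assms by linarith

lemma div_t:
  fixes t X Y Z :: real
  assumes "t*X \<le> t*Y + t^2*Z" "0 < t"
  shows "X \<le> Y + t*Z"
proof -
  have "t*X \<le> t*(Y + t*Z)" using assms(1) by (simp add: power2_eq_square algebra_simps)
  then show ?thesis using assms(2) by simp
qed

lemma scalar_combine:
  fixes t lam L rho fp fq fz fw zx2 wx2 px2 qx2 zwn I Px d nn C :: real
  assumes lam: "lam > 0" and t: "0 < t" "t \<le> 1" and L: "L \<ge> 0" and nn: "nn \<ge> 0" and C: "C \<ge> 0"
    and Px: "Px \<ge> 0" and d: "d \<ge> 0" and zwn0: "zwn \<ge> 0"
    and h1: "fp + px2/(2*lam) \<le> fz + zx2/(2*lam)"
    and h2: "fz \<le> fw + L*zwn"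
    and h3: "zwn \<le> t*nn + C*t^2"
    and h4: "zx2 = wx2 + 2*I + zwn^2"
    and h5: "I \<le> t*nn*Px + t^2*(nn*d + C*(Px+d))"
    and h7: "fw \<le> (1-t)*fp + t*fq + rho/2 * t*(1-t)*d^2"
    and h8: "wx2 = (1-t)*px2 + t*qx2 - t*(1-t)*d^2"
    and h9: "nn \<le> d^2/2"
    and h10: "Px \<le> 2*lam*L"
  shows "fp + px2/(2*lam) \<le> fq + qx2/(2*lam) - (1/lam - rho - 3*L)/2 * d^2
      + t * ((1/(2*lam) - rho/2)*d^2 + L*C + 2*(nn*d + C*(Px+d))/(2*lam) + (nn+C)^2/(2*lam))"
proof -
  have h6: "zwn^2 \<le> t^2*(nn+C)^2"
  proof -
    have "t*nn + C*t^2 \<le> t*(nn+C)" using t C by (simp add: algebra_simps power2_eq_square mult_left_mono)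
    then have "zwn \<le> t*(nn+C)" using h3 by linarith
    then have "zwn^2 \<le> (t*(nn+C))^2" using zwn0 by (simp add: power_mono)
    then show ?thesis by (simp add: power_mult_distrib)
  qed
  have Lz: "L*zwn \<le> L*(t*nn + C*t^2)" using h3 L by (simp add: mult_left_mono)
  have A: "2*lam*fp + px2 \<le> 2*lam*fz + zx2"
  proof -
    have "2*lam*(fp + px2/(2*lam)) \<le> 2*lam*(fz + zx2/(2*lam))" using h1 lam by (intro mult_left_mono) auto
    then show ?thesis using lam by (simp add: distrib_left)
  qed
  have B: "2*lam*fp + px2 \<le> 2*lam*((1-t)*fp + t*fq + rho/2 * t*(1-t)*d^2) + 2*lam*L*(t*nn + C*t^2)
       + ((1-t)*px2 + t*qx2 - t*(1-t)*d^2) + 2*(t*nn*Px + t^2*(nn*d + C*(Px+d))) + t^2*(nn+C)^2"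
  proof -
    have "2*lam*fz \<le> 2*lam*(fw + L*zwn)" using h2 lam by (intro mult_left_mono) auto
    then have "2*lam*fz \<le> 2*lam*fw + 2*lam*(L*zwn)" by (simp add: distrib_left)
    moreover have "2*lam*fw \<le> 2*lam*((1-t)*fp + t*fq + rho/2 * t*(1-t)*d^2)" using h7 lam by (intro mult_left_mono) auto
    moreover have "2*lam*(L*zwn) \<le> 2*lam*L*(t*nn + C*t^2)" using Lz lam
      by (metis mult.assoc mult_left_mono less_eq_real_def mult_pos_pos zero_less_numeral)
    ultimately show ?thesis by (rule lin_B[OF A _ _ _ h4 h5 h6 h8])
  qed
  have n1: "2*lam*L*(t*nn) \<le> 2*lam*L*(t*(d^2/2))" using h9 lam L t
    by (intro mult_left_mono) auto
  have n2: "2*(t*nn*Px) \<le> 2*(t*(d^2/2)*(2*lam*L))"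
  proof -
    have "nn*Px \<le> (d^2/2)*(2*lam*L)" using h9 h10 nn Px by (intro mult_mono) auto
    then show ?thesis using t by (simp add: mult.assoc mult_left_mono)
  qed
  have "t*(2*lam*fp + px2) \<le> t*(2*lam*fq + qx2 - (1 - lam*rho - 3*lam*L)*d^2)
      + t^2*((1 - lam*rho)*d^2 + 2*lam*L*C + 2*(nn*d + C*(Px+d)) + (nn+C)^2)"
    using B n1 n2 by (simp add: algebra_simps power2_eq_square divide_simps)
  then have "2*lam*fp + px2 \<le> 2*lam*fq + qx2 - (1 - lam*rho - 3*lam*L)*d^2
      + t*((1 - lam*rho)*d^2 + 2*lam*L*C + 2*(nn*d + C*(Px+d)) + (nn+C)^2)"
    using t(1) by (rule div_t)
  then have E: "(2*lam*fp + px2)/(2*lam) \<le> (2*lam*fq + qx2 - (1 - lam*rho - 3*lam*L)*d^2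
      + t*((1 - lam*rho)*d^2 + 2*lam*L*C + 2*(nn*d + C*(Px+d)) + (nn+C)^2))/(2*lam)"
    using lam by (intro divide_right_mono) auto
  have e1: "(2*lam*fp + px2)/(2*lam) = fp + px2/(2*lam)" using lam by (simp add: field_simps)
  have e2: "(2*lam*fq + qx2 - (1 - lam*rho - 3*lam*L)*d^2
      + t*((1 - lam*rho)*d^2 + 2*lam*L*C + 2*(nn*d + C*(Px+d)) + (nn+C)^2))/(2*lam)
     = fq + qx2/(2*lam) - (1/lam - rho - 3*L)/2 * d^2
      + t * ((1/(2*lam) - rho/2)*d^2 + L*C + 2*(nn*d + C*(Px+d))/(2*lam) + (nn+C)^2/(2*lam))"
    using lam by (simp add: field_simps)
  show ?thesis using E e1 e2 by simp
qed

lemma wc_lemma: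
  fixes fw fp fq rho W2 P2 Q2 t d :: real
  assumes "fw + rho/2 * W2 \<le> (1-t)*(fp + rho/2*P2) + t*(fq + rho/2*Q2)"
    and "W2 = (1-t)*P2 + t*Q2 - t*(1-t)*d^2"
  shows "fw \<le> (1-t)*fp + t*fq + rho/2 * t*(1-t)*d^2"
proof -
  have "fw \<le> (1-t)*fp + t*fq + rho/2*((1-t)*P2 + t*Q2 - W2)"
    using assms(1) by (simp add: field_simps)
  also have "rho/2*((1-t)*P2 + t*Q2 - W2) = rho/2 * t*(1-t)*d^2" using assms(2) by simp
  finally show ?thesis by simp
qed

lemma norm_add_sq:
  fixes a b :: "'a::real_inner"
  shows "(norm (a + b))^2 = (norm a)^2 + 2 * inner a b + (norm b)^2"
  unfolding power2_norm_eq_inner by (simp add: inner_add_left inner_add_right inner_commute)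

lemma sq_comb:
  fixes a b :: "'a::real_inner"
  shows "(norm ((1-t) *\<^sub>R a + t *\<^sub>R b))^2 = (1-t)*(norm a)^2 + t*(norm b)^2 - t*(1-t)*(norm (a - b))^2"
  unfolding power2_norm_eq_inner
  by (simp add: inner_add_left inner_add_right inner_diff_left inner_diff_right
      inner_commute algebra_simps)

lemma lim_t:
  fixes a b K :: real
  assumes "\<And>t. 0 < t \<Longrightarrow> t \<le> 1 \<Longrightarrow> a \<le> b + t*K"
  shows "a \<le> b"
proof (rule ccontr)
  assume "\<not> a \<le> b"
  then have pos: "a - b > 0" by simp
  define t where "t = min 1 ((a-b)/(2*(\<bar>K\<bar>+1)))"
  have t0: "t > 0" using pos by (simp add: t_def)
  have t1: "t \<le> 1" by (simp add: t_def)
  have "t*K \<le> t*\<bar>K\<bar>" using t0 by (simp add: mult_left_mono)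
  also have "\<dots> \<le> ((a-b)/(2*(\<bar>K\<bar>+1))) * \<bar>K\<bar>" by (intro mult_right_mono) (auto simp: t_def)
  also have "\<dots> < a - b"
  proof -
    have "((a-b)/(2*(\<bar>K\<bar>+1))) * \<bar>K\<bar> = (a-b) * (\<bar>K\<bar>/(2*(\<bar>K\<bar>+1)))" by simp
    also have "\<bar>K\<bar>/(2*(\<bar>K\<bar>+1)) < 1" by (simp add: field_simps)
    then have "(a-b) * (\<bar>K\<bar>/(2*(\<bar>K\<bar>+1))) < (a-b) * 1" using pos by (intro mult_strict_left_mono) auto
    finally show ?thesis by simp
  qed
  finally show False using assms[OF t0 t1] by simp
qed

lemma growth:
  fixes f :: "real^'r^'d \<Rightarrow> real" and \<rho> L lam :: real and U :: "(real^'r^'d) set"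
  assumes lam: "lam > 0" and rho: "\<rho> \<ge> 0" and wc: "weakly_convex \<rho> f"
    and cU: "convex U" and SU: "stiefel \<subseteq> U" and lip: "L-lipschitz_on U f"
    and x: "x \<in> stiefel" and p: "p \<in> prox_set lam f x" and q: "q \<in> stiefel"
  shows "f p + (norm (p - x))^2/(2*lam) \<le> f q + (norm (q - x))^2/(2*lam)
           - (1/lam - \<rho> - 3*L)/2 * (norm (q - p))^2"
proof -
  have pS: "p \<in> stiefel" and hp: "\<And>z. z \<in> stiefel \<Longrightarrow> f p + (norm (p - x))^2/(2*lam) \<le> f z + (norm (z - x))^2/(2*lam)"
    using p by (auto simp: prox_set_def frob_def)
  have L0: "L \<ge> 0" using lip by (rule lipschitz_on_nonneg)
  have lipD: "f a \<le> f b + L * norm (a - b)" if "a \<in> U" "b \<in> U" for a b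
    using lipschitz_onD[OF lip that] by (simp add: dist_real_def dist_norm)
  have op: "transpose p ** p = mat 1" using pS by (simp add: stiefel_def)
  have oq: "transpose q ** q = mat 1" using q by (simp add: stiefel_def)
  define Px where "Px = norm (p - x)"
  define d where "d = norm (q - p)"
  have Px_le: "Px \<le> 2*lam*L"
  proof -
    have "f p + Px^2/(2*lam) \<le> f x" using hp[OF x] by (simp add: Px_def)
    moreover have "f x \<le> f p + L * Px" using lipD[of x p] x pS SU by (auto simp: Px_def norm_minus_commute)
    ultimately have "Px^2/(2*lam) \<le> L*Px" by linarith
    then have "Px^2 \<le> 2*lam*L*Px" using lam by (simp add: field_simps)
    then have PP: "Px * Px \<le> (2*lam*L) * Px" by (simp add: power2_eq_square algebra_simps)
    show ?thesis
    proof (cases "Px = 0")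
      case True then show ?thesis using lam L0 by simp
    next
      case False then have "Px > 0" by (simp add: Px_def)
      then show ?thesis using PP mult_right_le_imp_le by blast
    qed
  qed
  obtain W :: "real^'d^'d" and n where skew: "transpose W = - W" and Wp: "W ** p = (q - p) + n"
    and nle: "norm n \<le> d^2/2"
    using tangent_decomp[OF op oq] by (auto simp: d_def)
  define C where "C = norm (W ** (W ** p)) / 2"
  define K where "K = (1/(2*lam) - \<rho>/2)*d^2 + L*C + 2*(norm n*d + C*(Px+d))/(2*lam) + (norm n+C)^2/(2*lam)"
  show ?thesis
  proof (rule lim_t)
    fix t :: real assume t0: "0 < t" and t1: "t \<le> 1"
    obtain z where zz: "transpose z ** z = mat 1"
      and ze: "norm (z - (p + t *\<^sub>R (W ** p))) \<le> t^2/2 * norm (W ** (W ** p))"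
      using cayley_curve[OF skew op, of t] by blast
    have zS: "z \<in> stiefel" using zz by (simp add: stiefel_def)
    define w where "w = (1-t) *\<^sub>R p + t *\<^sub>R q"
    define e where "e = z - (p + t *\<^sub>R (W ** p))"
    have e_le: "norm e \<le> C * t^2" using ze by (simp add: e_def C_def ac_simps)
    have wU: "w \<in> U" unfolding w_def using cU pS q SU t0 t1 by (intro convexD) auto
    have zw: "z - w = t *\<^sub>R n + e" by (simp add: e_def w_def Wp algebra_simps)
    have wx: "w - x = (p - x) + t *\<^sub>R (q - p)" by (simp add: w_def algebra_simps)
    have h1: "f p + (norm (p - x))^2/(2*lam) \<le> f z + (norm (z - x))^2/(2*lam)" by (rule hp[OF zS])
    have h2: "f z \<le> f w + L * norm (z - w)" using lipD[of z w] zS SU wU by auto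
    have h3: "norm (z - w) \<le> t * norm n + C * t^2"
      unfolding zw using norm_triangle_ineq[of "t *\<^sub>R n" e] e_le t0 by simp
    have h4: "(norm (z - x))^2 = (norm (w - x))^2 + 2 * inner (z - w) (w - x) + (norm (z - w))^2"
    proof -
      have "z - x = (z - w) + (w - x)" by simp
      then show ?thesis by (simp only: norm_add_sq)
    qed
    have h5: "inner (z - w) (w - x) \<le> t * norm n * Px + t^2 * (norm n * d + C * (Px + d))"
    proof -
      have "inner (z - w) (w - x) = t * inner n (p - x) + t^2 * inner n (q - p) + inner e (w - x)"
        by (simp add: zw wx inner_add_left inner_add_right power2_eq_square algebra_simps)
      moreover have "inner n (p - x) \<le> norm n * Px" using norm_cauchy_schwarz by (simp add: Px_def)
      moreover have "inner n (q - p) \<le> norm n * d" using norm_cauchy_schwarz by (simp add: d_def)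
      moreover have "inner e (w - x) \<le> C * t^2 * (Px + d)"
      proof -
        have "norm (w - x) \<le> Px + t * d" unfolding wx
          using norm_triangle_ineq[of "p - x" "t *\<^sub>R (q - p)"] t0 by (simp add: Px_def d_def)
        also have "\<dots> \<le> Px + d" using t1 t0 by (simp add: d_def mult_left_le_one_le less_imp_le)
        finally have "norm (w - x) \<le> Px + d" .
        then have "norm e * norm (w - x) \<le> C * t^2 * (Px + d)"
          using e_le by (intro mult_mono) (auto simp: C_def)
        then show ?thesis using norm_cauchy_schwarz[of e "w - x"] by linarith
      qed
      moreover have "t * inner n (p - x) \<le> t * (norm n * Px)" using calculation(2) t0 by (intro mult_left_mono) auto
      moreover have "t^2 * inner n (q - p) \<le> t^2 * (norm n * d)" using calculation(3) by (intro mult_left_mono) auto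
      ultimately show ?thesis by (simp add: algebra_simps)
    qed
    have h7: "f w \<le> (1-t)*f p + t*f q + \<rho>/2 * t*(1-t)*d^2"
    proof -
      have "f w + \<rho>/2 * (norm w)^2 \<le> (1-t)*(f p + \<rho>/2*(norm p)^2) + t*(f q + \<rho>/2*(norm q)^2)"
        using convex_onD[OF wc[unfolded weakly_convex_def], of t p q] t0 t1
        by (simp add: w_def frob_def)
      moreover have "(norm w)^2 = (1-t)*(norm p)^2 + t*(norm q)^2 - t*(1-t)*d^2"
        unfolding w_def sq_comb by (simp add: d_def norm_minus_commute)
      ultimately show ?thesis by (rule wc_lemma)
    qed
    have h8: "(norm (w - x))^2 = (1-t)*(norm (p - x))^2 + t*(norm (q - x))^2 - t*(1-t)*d^2"
    proof -
      have "w - x = (1-t) *\<^sub>R (p - x) + t *\<^sub>R (q - x)" by (simp add: w_def algebra_simps)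
      then show ?thesis using sq_comb[of t "p - x" "q - x"] by (simp add: d_def norm_minus_commute)
    qed
    have "f p + (norm (p - x))^2/(2*lam) \<le> f q + (norm (q - x))^2/(2*lam) - (1/lam - \<rho> - 3*L)/2 * d^2
      + t * ((1/(2*lam) - \<rho>/2)*d^2 + L*C + 2*(norm n*d + C*(Px+d))/(2*lam) + (norm n+C)^2/(2*lam))"
      by (rule scalar_combine[OF lam t0 t1 L0 norm_ge_zero _ _ _ norm_ge_zero h1 h2 h3 h4 h5 h7 h8 nle Px_le])
        (auto simp: C_def Px_def d_def)
    then show "f p + (norm (p - x))^2/(2*lam) \<le> f q + (norm (q - x))^2/(2*lam)
           - (1/lam - \<rho> - 3*L)/2 * (norm (q - p))^2 + t * K"
      by (simp add: K_def d_def)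
  qed
qed




lemma stiefel_norm:
  assumes "(x::real^'r^'d) \<in> stiefel"
  shows "(norm x)^2 = real CARD('r)"
proof -
  have "(norm x)^2 = (\<Sum>i\<in>UNIV. \<Sum>j\<in>UNIV. (x$i$j)^2)" by (rule norm_sq_mat)
  also have "\<dots> = (\<Sum>j\<in>UNIV. \<Sum>i\<in>UNIV. x$i$j * x$i$j)" by (subst sum.swap) (simp add: power2_eq_square)
  also have "\<dots> = (\<Sum>j\<in>(UNIV::'r set). (transpose x ** x)$j$j)"
    by (simp add: matrix_matrix_mult_def transpose_def)
  also have "\<dots> = (\<Sum>j\<in>(UNIV::'r set). 1)" using assms by (simp add: stiefel_def mat_def)
  finally show ?thesis by simp
qed

lemma compact_stiefel: "compact (stiefel :: (real^'r^'d) set)"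
proof -
  have "stiefel = {x::real^'r^'d. transpose x ** x = mat 1}" by (simp add: stiefel_def)
  moreover have "closed {x::real^'r^'d. transpose x ** x = mat 1}"
  proof (rule closed_Collect_eq)
    show "continuous_on UNIV (\<lambda>x::real^'r^'d. transpose x ** x)"
      unfolding matrix_matrix_mult_def transpose_def
      by (intro continuous_intros)
  qed (rule continuous_on_const)
  moreover have "bounded (stiefel :: (real^'r^'d) set)"
    unfolding bounded_iff
    by (rule exI[of _ "sqrt (real CARD('r))"]) (auto simp: stiefel_norm real_le_rsqrt)
  ultimately show ?thesis by (simp add: compact_eq_bounded_closed)
qed


lemma inner_identity:
  fixes p q x y :: "'a::real_inner"
  shows "(norm (p - x))^2 + (norm (q - y))^2 - (norm (q - x))^2 - (norm (p - y))^2 = - 2 * inner (p - q) (x - y)"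
  unfolding power2_norm_eq_inner
  by (simp add: inner_diff_left inner_diff_right inner_commute algebra_simps)

lemma neg_lemma:
  fixes I lam a N :: real
  assumes "- 2 * I / (2*lam) \<le> - a * N"
  shows "a * N \<le> I / lam"
proof -
  have "- 2 * I / (2*lam) = - (I/lam)" by simp
  then show ?thesis using assms by linarith
qed

lemma comb_lemma:
  fixes fp fq A B Cq D k c N :: real
  assumes "fp + A/k \<le> fq + Cq/k - c*N" "fq + B/k \<le> fp + D/k - c*N"
  shows "(A + B - Cq - D)/k \<le> - (2*c)*N"
proof -
  have "(A + B - Cq - D)/k = A/k + B/k - Cq/k - D/k" by (simp add: add_divide_distrib diff_divide_distrib)
  then show ?thesis using assms by linarith
qed

theorem lemma4p1:
  fixes f :: "real^'r^'d \<Rightarrow> real" and \<rho> L lam :: real and U :: "(real^'r^'d) set"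
  assumes "CARD('r) \<le> CARD('d)"
    and "\<rho> \<ge> 0"
    and "weakly_convex \<rho> f"
    and "bounded U" "open U" "convex U" "stiefel \<subseteq> U"
    and "L-lipschitz_on U f"
    and "0 < lam" "lam < 1 / (\<rho> + 3 * L)"
  shows "(\<forall>x \<in> stiefel. \<exists>!p. p \<in> prox_set lam f x) \<and>
         (\<forall>x \<in> stiefel. \<forall>y \<in> stiefel. \<forall>p \<in> prox_set lam f x. \<forall>q \<in> prox_set lam f y.
            frob (p - q) \<le> 1 / (1 - lam * (\<rho> + 3 * L)) * frob (x - y))"
proof -
  note lam = assms(9) and rho = assms(2) and wc = assms(3) and cU = assms(6) and SU = assms(7)
    and lip = assms(8)
  define \<kappa> where "\<kappa> = \<rho> + 3 * L"
  have L0: "L \<ge> 0" using lip by (rule lipschitz_on_nonneg)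
  have kpos: "\<kappa> > 0"
  proof (rule ccontr)
    assume "\<not> \<kappa> > 0"
    then have "1 / (\<rho> + 3 * L) \<le> 0" by (simp add: \<kappa>_def)
    then show False using assms(10) lam by linarith
  qed
  have lk: "lam * \<kappa> < 1" using assms(10) kpos by (simp add: \<kappa>_def field_simps)
  have key: "(1 - lam * \<kappa>) * (norm (p - q))^2 \<le> norm (p - q) * norm (x - y)"
    if x: "x \<in> stiefel" and y: "y \<in> stiefel" and p: "p \<in> prox_set lam f x" and q: "q \<in> prox_set lam f y"
    for x y p q
  proof -
    have pS: "p \<in> stiefel" and qS: "q \<in> stiefel" using p q by (auto simp: prox_set_def)
    have G1: "f p + (norm (p - x))^2/(2*lam) \<le> f q + (norm (q - x))^2/(2*lam)
           - (1/lam - \<rho> - 3*L)/2 * (norm (q - p))^2"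
      by (rule growth[OF lam rho wc cU SU lip x p qS])
    have G2: "f q + (norm (q - y))^2/(2*lam) \<le> f p + (norm (p - y))^2/(2*lam)
           - (1/lam - \<rho> - 3*L)/2 * (norm (p - q))^2"
      by (rule growth[OF lam rho wc cU SU lip y q pS])
    have "((norm (p - x))^2 + (norm (q - y))^2 - (norm (q - x))^2 - (norm (p - y))^2)/(2*lam)
          \<le> - (1/lam - \<kappa>) * (norm (p - q))^2"
    proof -
      have "2 * ((1/lam - \<rho> - 3*L)/2) = 1/lam - \<kappa>" by (simp add: \<kappa>_def)
      then show ?thesis
        using comb_lemma[OF G1 G2[unfolded norm_minus_commute[of p q]]]
        by (simp only: norm_minus_commute[of q p])
    qed
    then have "- 2 * inner (p - q) (x - y) / (2*lam) \<le> - (1/lam - \<kappa>) * (norm (p - q))^2"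
      by (simp only: inner_identity)
    then have "(1/lam - \<kappa>) * (norm (p - q))^2 \<le> inner (p - q) (x - y) / lam"
      by (rule neg_lemma)
    then have "lam * ((1/lam - \<kappa>) * (norm (p - q))^2) \<le> lam * (inner (p - q) (x - y) / lam)"
      using lam by (intro mult_left_mono) auto
    moreover have "lam * ((1/lam - \<kappa>) * (norm (p - q))^2) = (1 - lam * \<kappa>) * (norm (p - q))^2"
      using lam by (simp add: field_simps)
    moreover have "lam * (inner (p - q) (x - y) / lam) = inner (p - q) (x - y)"
      using lam by simp
    ultimately have "(1 - lam * \<kappa>) * (norm (p - q))^2 \<le> inner (p - q) (x - y)"
      by simp
    also have "\<dots> \<le> norm (p - q) * norm (x - y)" by (rule norm_cauchy_schwarz)
    finally show ?thesis .
  qed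
  have part2: "\<forall>x \<in> stiefel. \<forall>y \<in> stiefel. \<forall>p \<in> prox_set lam f x. \<forall>q \<in> prox_set lam f y.
            frob (p - q) \<le> 1 / (1 - lam * (\<rho> + 3 * L)) * frob (x - y)"
  proof (intro ballI)
    fix x y p q assume x: "x \<in> stiefel" and y: "y \<in> stiefel" and p: "p \<in> prox_set lam f x"
      and q: "q \<in> prox_set lam f y"
    have k: "(1 - lam * \<kappa>) * (norm (p - q))^2 \<le> norm (p - q) * norm (x - y)"
      by (rule key[OF x y p q])
    have c: "1 - lam * \<kappa> > 0" using lk by simp
    show "frob (p - q) \<le> 1 / (1 - lam * (\<rho> + 3 * L)) * frob (x - y)"
    proof (cases "norm (p - q) = 0")
      case True then show ?thesis using c by (simp add: frob_def \<kappa>_def)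
    next
      case False
      then have np: "norm (p - q) > 0" by simp
      have "(1 - lam * \<kappa>) * norm (p - q) * norm (p - q) \<le> norm (x - y) * norm (p - q)"
        using k by (simp add: power2_eq_square algebra_simps)
      then have "(1 - lam * \<kappa>) * norm (p - q) \<le> norm (x - y)"
        using np mult_right_le_imp_le by blast
      then show ?thesis using c by (simp add: frob_def \<kappa>_def field_simps)
    qed
  qed
  have part1: "\<forall>x \<in> stiefel. \<exists>!p. p \<in> prox_set lam f x"
  proof
    fix x :: "real^'r^'d" assume x: "x \<in> stiefel"
    have cf: "continuous_on stiefel f"
      using lipschitz_on_continuous_on[OF lip] SU continuous_on_subset by blast
    have "continuous_on stiefel (\<lambda>z. f z + 1 / (2 * lam) * (frob (z - x))\<^sup>2)"
      unfolding frob_def by (intro continuous_intros cf)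
    then obtain p where pS: "p \<in> stiefel"
      and pmin: "\<forall>z \<in> stiefel. f p + 1 / (2 * lam) * (frob (p - x))\<^sup>2 \<le> f z + 1 / (2 * lam) * (frob (z - x))\<^sup>2"
      using continuous_attains_inf[OF compact_stiefel, of "\<lambda>z. f z + 1 / (2 * lam) * (frob (z - x))\<^sup>2"] x
      by blast
    have pP: "p \<in> prox_set lam f x" using pS pmin by (simp add: prox_set_def)
    show "\<exists>!p. p \<in> prox_set lam f x"
    proof (rule ex1I[of _ p])
      show "p \<in> prox_set lam f x" by (rule pP)
    next
      fix q assume q: "q \<in> prox_set lam f x"
      have "(1 - lam * \<kappa>) * (norm (q - p))^2 \<le> norm (q - p) * norm (x - x)"
        by (rule key[OF x x q pP])
      then have "(1 - lam * \<kappa>) * (norm (q - p))^2 \<le> 0" by simp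
      then have "(norm (q - p))^2 \<le> 0" using lk
        by (metis diff_gt_0_iff_gt mult_le_0_iff not_le zero_le_power2)
      then show "q = p" by simp
    qed
  qed
  show ?thesis using part1 part2 by blast
qed


end
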